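(* Let $p$ be an odd prime and let $a,b_1,b_2,c$ be integers such that $0\le a<p$, $0<c\le p$, $0\le b_2-c+1<p$, $0\le b_1+b_2-c+1<p$, and $p-1\le a+b_1+b_2-c+1<2p-1$. Then in $\mathbb{F}_p$ $$\int_{[1;1]_p}t^a(1-t)^{b_1}(s-t)^{p-c}(1-s)^{b_2}\,dt\,ds=\frac{a!\,(b_1+b_2-c+1)!}{(a+b_1+b_2-c+2-p)!}\cdot\frac{(p-c)!\,b_2!}{(b_2-c+1)!}.$$
   Context: For a polynomial $P(x_1,\dots,x_k)=\sum_d c_dx_1^{d_1}\cdots x_k^{d_k}$ with coefficients in $\mathbb{F}_p$ and $l\in\mathbb{Z}_{>0}^k$, the $\mathbb{F}_p$-integral $\int_{[l_1,\dots,l_k]_p}P\,dx$ is the coefficient $c_{l_1p-1,\dots,l_kp-1}$. Thus the left-hand side is the coefficient of $t^{p-1}s^{p-1}$ in the polynomial reduced mod $p$. Factorials are taken in $\mathbb{F}_p$. *)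

theory Defs
  imports "HOL-Computational_Algebra.Polynomial" "HOL-Library.Cardinality"
begin

text \<open>Bivariate polynomials in variables t, s over a ring 'a are represented as
  'a poly poly: the outer variable is s, the inner (coefficient) variable is t.
  So the coefficient of t^i s^j of P is coeff (coeff P j) i.\<close>

definition var_t :: "'a::comm_ring_1 poly poly" where
  "var_t = [:[:0, 1:]:]"

definition var_s :: "'a::comm_ring_1 poly poly" where
  "var_s = [:0, 1:]"

text \<open>The F_p-integral over [l1, l2]_p (l1 for t, l2 for s): the coefficient of
  t^(l1 p - 1) s^(l2 p - 1), where p = CARD('a) (the field 'a is F_p).\<close>

definition fp_integral2 :: "nat \<Rightarrow> nat \<Rightarrow> 'a::{field,finite} poly poly \<Rightarrow> 'a" where
  "fp_integral2 l1 l2 P = coeff (coeff P (l2 * CARD('a) - 1)) (l1 * CARD('a) - 1)"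

end

theory Submission
  imports Defs "HOL-Number_Theory.Residues"
begin

lemma char_p:
  assumes "CARD('a::{field,finite}) = p" "prime p"
  shows "CHAR('a) = p"
proof -
  have "CHAR('a) dvd p" using CHAR_dvd_CARD[where 'a='a] assms by simp
  moreover have "CHAR('a) \<noteq> 1" using CHAR_not_1'[where 'a='a] by simp
  ultimately show ?thesis using assms(2)
    by (metis prime_nat_iff)
qed

lemma ofnat0:
  assumes "CARD('a::{field,finite}) = p" "prime p"
  shows "(of_nat n :: 'a) = 0 \<longleftrightarrow> p dvd n"
  using char_p[OF assms] of_nat_eq_0_iff_char_dvd by metis

lemma fact_nz:
  assumes "CARD('a::{field,finite}) = p" "prime p" "n < p"
  shows "(of_nat (fact n) :: 'a) \<noteq> 0"
  using ofnat0[OF assms(1,2)] prime_dvd_fact_iff[OF assms(2)] assms(3) by auto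

lemma fact_z:
  assumes "CARD('a::{field,finite}) = p" "prime p" "p \<le> n"
  shows "(of_nat (fact n) :: 'a) = 0"
  using ofnat0[OF assms(1,2)] prime_dvd_fact_iff[OF assms(2)] assms(3) by auto

lemma wilson_a:
  assumes "CARD('a::{field,finite}) = p" "prime p"
  shows "(of_nat (fact (p - 1)) :: 'a) = -1"
proof -
  have "[int (fact (p - 1)) = - 1] (mod int p)"
    using wilson_theorem[OF assms(2)] by (simp add: of_nat_fact)
  then have "(of_int (int (fact (p - 1))) :: 'a) = of_int (-1)"
    using of_int_eq_iff_cong_CHAR[where 'a='a, of "int (fact (p - 1))" "-1"] char_p[OF assms] by simp
  then show ?thesis by (metis of_int_of_nat_eq of_int_minus of_int_1)
qed

lemma wilson_gen:
  assumes "CARD('a::{field,finite}) = p" "prime p"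
  shows "j < p \<Longrightarrow> (of_nat (fact j) :: 'a::{field,finite}) * of_nat (fact (p - 1 - j)) = (-1) ^ (j + 1)"
proof (induction j)
  case 0
  then show ?case using wilson_a[OF assms] by simp
next
  case (Suc j)
  have e: "p - 1 - j = Suc (p - 1 - Suc j)" using Suc.prems by simp
  have "(of_nat (p - 1 - j) :: 'a) + of_nat (Suc j) = of_nat p"
    using Suc.prems by (simp flip: of_nat_add)
  also have "(of_nat p :: 'a) = 0" using ofnat0[OF assms] by simp
  finally have n: "(of_nat (p - 1 - j) :: 'a) = - of_nat (Suc j)"
    by (simp add: add_eq_0_iff2)
  have "(of_nat (fact j) :: 'a) * of_nat (fact (p - 1 - j)) = of_nat (fact j) * (of_nat (p - 1 - j) * of_nat (fact (p - 1 - Suc j)))"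
  proof -
    have "fact (p - 1 - j) = (p - 1 - j) * (fact (p - 1 - Suc j) :: nat)" by (simp only: e fact_Suc of_nat_id)
    then show ?thesis by (metis of_nat_mult)
  qed
  also have "\<dots> = - (of_nat (fact (Suc j)) * of_nat (fact (p - 1 - Suc j)))"
  proof -
    have "(of_nat (fact (Suc j)) :: 'a) = of_nat (Suc j) * of_nat (fact j)"
      by (simp only: fact_Suc of_nat_mult of_nat_id)
    then show ?thesis by (simp only: n) (simp add: algebra_simps)
  qed
  finally show ?case using Suc by simp
qed

lemma coeff_lin_pow:
  fixes a b :: "'a::comm_semiring_1"
  shows "Polynomial.coeff ([:a, b:] ^ n) i = of_nat (n choose i) * b ^ i * a ^ (n - i)"
proof (cases "i \<le> n")
  case True
  then show ?thesis by (rule coeff_linear_poly_power)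
next
  case False
  have "degree ([:a, b:] ^ n) \<le> 1 * n"
    by (rule order.trans[OF degree_power_le]) (simp add: degree_pCons_le)
  then show ?thesis using False by (simp add: coeff_eq_0 binomial_eq_0)
qed

lemma const_pow: "[:x:] ^ n = [:x ^ n:]"
  by (induct n) (auto simp: mult.commute)

lemma monom_prod: "(of_nat n :: 'a::comm_ring_1 poly) * Polynomial.monom c e * [:d:] = Polynomial.monom (of_nat n * c * d) e"
  by (simp add: of_nat_poly monom_0 [symmetric] mult_monom)

lemma binom_of:
  assumes "k \<le> n" "(of_nat (fact k) :: 'a::field) \<noteq> 0" "(of_nat (fact (n - k)) :: 'a) \<noteq> 0"
  shows "(of_nat (n choose k) :: 'a) = of_nat (fact n) / (of_nat (fact k) * of_nat (fact (n - k)))"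
proof -
  have "fact k * fact (n - k) * (n choose k) = (fact n :: nat)" by (rule binomial_fact_lemma[OF assms(1)])
  then have "(of_nat (fact k) * of_nat (fact (n - k)) * of_nat (n choose k) :: 'a) = of_nat (fact n)"
    by (metis of_nat_mult)
  then show ?thesis using assms by (simp add: field_simps)
qed

lemma s1:
  assumes "CARD('a::{field,finite}) = p" "prime p" "0 < c" "c \<le> p" "c \<le> b2 + 1" "j \<le> p - c" "b2 + 1 - c < p"
  shows "(of_nat ((p - c) choose j) * (-1) ^ j * (of_nat (b2 choose (c - 1 + j)) * (-1) ^ (c - 1 + j)) :: 'a)
     = - of_nat (fact (p - c)) * of_nat (fact b2) / of_nat (fact (b2 + 1 - c)) * of_nat ((b2 + 1 - c) choose j) * (-1) ^ j"
proof (cases "j \<le> b2 + 1 - c")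
  case True
  define m where "m = c - 1 + j"
  define D where "D = b2 + 1 - c"
  have mp: "m < p" "m \<le> b2" "b2 - m = D - j" "p - 1 - m = p - c - j" "j \<le> D"
    using assms True unfolding m_def D_def by auto
  note assms(7)[folded D_def]
  have Dp: "D < p" "j < p" "p - c < p" "p - c - j < p" "D - j < p" using assms mp by auto
  note nz = fact_nz[OF assms(1,2)]
  have W: "(of_nat (fact m) :: 'a) * of_nat (fact (p - c - j)) = (-1) ^ (m + 1)"
    using wilson_gen[OF assms(1,2) mp(1)] mp(4) by simp
  have C1: "(of_nat ((p - c) choose j) :: 'a) = of_nat (fact (p - c)) / (of_nat (fact j) * of_nat (fact (p - c - j)))"
    by (rule binom_of) (use assms nz Dp in auto)
  have C2: "(of_nat (b2 choose m) :: 'a) = of_nat (fact b2) / (of_nat (fact m) * of_nat (fact (D - j)))"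
    using binom_of[OF mp(2) nz[OF mp(1)]] nz[OF Dp(5)] mp(3) by simp
  have C3: "(of_nat (D choose j) :: 'a) = of_nat (fact D) / (of_nat (fact j) * of_nat (fact (D - j)))"
    by (rule binom_of[OF mp(5) nz[OF Dp(2)] nz[OF Dp(5)]])
  have F: "(of_nat (fact (p - c - j)) :: 'a) = (-1) ^ (m + 1) / of_nat (fact m)"
    using W nz[OF mp(1)] by (simp add: field_simps)
  show ?thesis
    unfolding m_def[symmetric] D_def[symmetric] C1 C2 C3 F
    using nz[OF mp(1)] nz[OF Dp(1)] nz[OF Dp(2)] nz[OF Dp(5)]
    by (simp add: field_simps)
next
  case False
  then show ?thesis by (simp add: binomial_eq_0)
qed

lemma s3:
  assumes "CARD('a::{field,finite}) = p" "prime p" "odd p" "a < p" "p - 1 \<le> a + B" "B < p"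
  shows "- Y * (of_nat (B choose (p - 1 - a)) * (-1) ^ (p - 1 - a)) =
         of_nat (fact a) * of_nat (fact B) / of_nat (fact (a + B + 1 - p)) * (Y :: 'a)"
proof -
  define m where "m = p - 1 - a"
  have mm: "m \<le> B" "B - m = a + B + 1 - p" "m < p" "B - m < p" using assms unfolding m_def by auto
  note nz = fact_nz[OF assms(1,2)]
  have W: "(of_nat (fact a) :: 'a) * of_nat (fact m) = (-1) ^ (a + 1)"
    using wilson_gen[OF assms(1,2,4)] unfolding m_def by simp
  have F: "(of_nat (fact m) :: 'a) = (-1) ^ (a + 1) / of_nat (fact a)"
    using W nz[OF assms(4)] by (simp add: field_simps)
  have C: "(of_nat (B choose m) :: 'a) = of_nat (fact B) / (of_nat (fact m) * of_nat (fact (B - m)))"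
    by (rule binom_of[OF mm(1) nz[OF mm(3)] nz[OF mm(4)]])
  have ev: "even m \<longleftrightarrow> even a" using assms(3,4) unfolding m_def by (cases p) auto
  have S: "(-1::'a) ^ m = (-1) ^ a" using ev by (simp add: minus_one_power_iff)
  show ?thesis
    unfolding m_def[symmetric] mm(2)[symmetric] C F S
    using nz[OF assms(4)] nz[OF mm(4)]
    by (cases "even a") (simp_all add: field_simps minus_one_power_iff)
qed

lemma neg1_pow: "(-1::'a::comm_ring_1 poly) ^ m = [:(-1) ^ m:]"
  by (induct m) (auto simp: mult.commute)

lemma monom_const: "Polynomial.monom c e * [:d:] = Polynomial.monom (c * d) e"
  by (simp add: monom_0 [symmetric] mult_monom)

lemma negX_pow: "[:0, -1::'a::comm_ring_1:] ^ e = Polynomial.monom ((-1) ^ e) e"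
proof -
  have "[:0, -1::'a:] = Polynomial.monom (-1) 1" by (simp add: monom_Suc monom_0)
  then show ?thesis by (simp add: monom_power)
qed

theorem theorem3p7:
  fixes p a b1 b2 c :: nat
  assumes "prime p" and "odd p" and "CARD('a::{field,finite}) = p"
    and "a < p" and "0 < c" and "c \<le> p"
    and "c \<le> b2 + 1" and "b2 + 1 - c < p"
    and "c \<le> b1 + b2 + 1" and "b1 + b2 + 1 - c < p"
    and "c \<le> a + b1 + b2 + 1"
    and "p - 1 \<le> a + b1 + b2 + 1 - c" and "a + b1 + b2 + 1 - c < 2 * p - 1"
  shows "fp_integral2 1 1
           ((var_t :: 'a poly poly) ^ a * (1 - var_t) ^ b1 * (var_s - var_t) ^ (p - c) * (1 - var_s) ^ b2)
         = of_nat (fact a) * of_nat (fact (b1 + b2 + 1 - c)) / of_nat (fact (a + b1 + b2 + 2 - c - p))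
           * (of_nat (fact (p - c)) * of_nat (fact b2) / of_nat (fact (b2 + 1 - c)))"
proof -
  define X :: "'a poly" where "X = [:0, 1:]"
  define D where "D = b2 + 1 - c"
  define B where "B = b1 + D"
  define K :: 'a where "K = - of_nat (fact (p - c)) * of_nat (fact b2) / of_nat (fact D)"
  define f where "f = X ^ a * [:1, -1:] ^ b1"
  define Q :: "'a poly poly" where "Q = [:-X, 1:] ^ (p - c) * [:1, -1:] ^ b2"
  have h1: "(1 - var_t :: 'a poly poly) = [:[:1, -1:]:]" by (simp add: var_t_def one_pCons)
  have h2: "(var_s - var_t :: 'a poly poly) = [:-X, 1:]" by (simp add: var_t_def var_s_def X_def)
  have h3: "(1 - var_s :: 'a poly poly) = [:1, -1:]" by (simp add: var_s_def one_pCons)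
  have P: "(var_t :: 'a poly poly) ^ a * (1 - var_t) ^ b1 * (var_s - var_t) ^ (p - c) * (1 - var_s) ^ b2 = Polynomial.smult f Q"
    unfolding h1 h2 h3 Q_def f_def by (simp add: var_t_def X_def const_pow mult.assoc mult.commute)
  have cA: "Polynomial.coeff ([:-X, 1:] ^ (p - c)) k
      = Polynomial.monom (of_nat ((p - c) choose k) * (-1) ^ (p - c - k)) (p - c - k)" for k
  proof -
    have n: "-X = [:0, -1:]" by (simp add: X_def)
    have "Polynomial.coeff ([:-X, 1:] ^ (p - c)) k = of_nat ((p - c) choose k) * 1 ^ k * (-X) ^ (p - c - k)"
      by (rule coeff_lin_pow)
    also have "\<dots> = of_nat ((p - c) choose k) * Polynomial.monom ((-1) ^ (p - c - k)) (p - c - k)"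
      by (simp only: n negX_pow power_one mult_1_right)
    finally show ?thesis by (simp add: of_nat_poly smult_monom)
  qed
  have cB: "Polynomial.coeff (([:1, -1:] :: 'a poly poly) ^ b2) m = [:of_nat (b2 choose m) * (-1) ^ m :: 'a:]" for m
    by (simp add: coeff_lin_pow of_nat_poly neg1_pow)
  define v where "v k = of_nat ((p - c) choose k) * (-1) ^ (p - c - k) * (of_nat (b2 choose (p - 1 - k)) * (-1) ^ (p - 1 - k) :: 'a)" for k
  have cQ: "Polynomial.coeff Q (p - 1) = (\<Sum>k\<le>p - 1. Polynomial.monom (v k) (p - c - k))"
    unfolding Q_def coeff_mult cA cB monom_const v_def by simp
  have Qc: "Polynomial.coeff Q (p - 1) = Polynomial.smult K ([:1, -1:] ^ D)"
  proof (rule poly_eqI)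
    fix j
    have l: "Polynomial.coeff (Polynomial.coeff Q (p - 1)) j = (\<Sum>k\<le>p - 1. if p - c - k = j then v k else 0)"
      unfolding cQ coeff_sum by simp
    have r: "Polynomial.coeff (Polynomial.smult K ([:1, -1:] ^ D)) j = K * (of_nat (D choose j) * (-1) ^ j)"
      by (simp add: coeff_lin_pow)
    show "Polynomial.coeff (Polynomial.coeff Q (p - 1)) j = Polynomial.coeff (Polynomial.smult K ([:1, -1:] ^ D)) j"
    proof (cases "j \<le> p - c")
      case True
      have "(\<Sum>k\<le>p - 1. if p - c - k = j then v k else 0) = (\<Sum>k\<le>p - 1. if k = p - c - j then v k else 0)"
      proof (rule sum.cong)
        fix k assume "k \<in> {..p - 1}"
        show "(if p - c - k = j then v k else 0) = (if k = p - c - j then v k else 0)"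
        proof (cases "k \<le> p - c")
          case True then show ?thesis using \<open>j \<le> p - c\<close> assms(6) by auto
        next
          case False
          then have "v k = 0" by (simp add: v_def binomial_eq_0)
          then show ?thesis using False by auto
        qed
      qed simp
      also have "\<dots> = v (p - c - j)" using assms True by simp
      also have "\<dots> = of_nat ((p - c) choose j) * (-1) ^ j * (of_nat (b2 choose (c - 1 + j)) * (-1) ^ (c - 1 + j))"
      proof -
        have e1: "p - c - (p - c - j) = j" using True by simp
        have e2: "p - 1 - (p - c - j) = c - 1 + j" using True assms by simp
        show ?thesis unfolding v_def e1 e2 using binomial_symmetric[OF True] by simp
      qed
      also have "\<dots> = K * (of_nat (D choose j) * (-1) ^ j)"
        using s1[OF assms(3,1,5,6,7) True assms(8)] unfolding K_def D_def by simp
      finally show ?thesis by (simp only: l r)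
    next
      case False
      have "K * (of_nat (D choose j) * (-1) ^ j) = 0"
      proof (cases "j \<le> D")
        case True
        then have "p \<le> b2" using False assms unfolding D_def by simp
        then have "(of_nat (fact b2) :: 'a) = 0" by (rule fact_z[OF assms(3,1)])
        then show ?thesis by (simp add: K_def)
      next
        case False
        then show ?thesis by (simp add: binomial_eq_0)
      qed
      moreover have "(\<Sum>k\<le>p - 1. if p - c - k = j then v k else (0::'a)) = 0"
        by (rule sum.neutral) (use False in auto)
      ultimately show ?thesis by (simp only: l r)
    qed
  qed
  have X1: "X = Polynomial.monom 1 1" by (simp add: X_def monom_Suc monom_0)
  have Xa: "X ^ a = Polynomial.monom 1 a" unfolding X1 by (simp add: monom_power)
  have fQ: "f * Polynomial.coeff Q (p - 1) = Polynomial.monom 1 a * Polynomial.smult K ([:1, -1:] ^ B)"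
    unfolding Qc f_def Xa B_def by (simp add: power_add mult_ac)
  have "fp_integral2 1 1
           ((var_t :: 'a poly poly) ^ a * (1 - var_t) ^ b1 * (var_s - var_t) ^ (p - c) * (1 - var_s) ^ b2)
        = Polynomial.coeff (Polynomial.coeff (Polynomial.smult f Q) (p - 1)) (p - 1)"
    unfolding fp_integral2_def P using assms(3) by simp
  also have "\<dots> = K * (of_nat (B choose (p - 1 - a)) * (-1) ^ (p - 1 - a))"
    unfolding coeff_smult fQ using assms(4) by (simp add: coeff_monom_mult coeff_lin_pow)
  also have "\<dots> = of_nat (fact a) * of_nat (fact B) / of_nat (fact (a + B + 1 - p))
      * (of_nat (fact (p - c)) * of_nat (fact b2) / of_nat (fact D))"
    unfolding K_def using s3[OF assms(3,1,2,4), of B "of_nat (fact (p - c)) * of_nat (fact b2) / of_nat (fact D)"]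
      assms unfolding B_def D_def by (simp add: mult_ac)
  finally have R: "fp_integral2 1 1
           ((var_t :: 'a poly poly) ^ a * (1 - var_t) ^ b1 * (var_s - var_t) ^ (p - c) * (1 - var_s) ^ b2)
        = of_nat (fact a) * of_nat (fact B) / of_nat (fact (a + B + 1 - p))
      * (of_nat (fact (p - c)) * of_nat (fact b2) / of_nat (fact D))" .
  have e: "B = b1 + b2 + 1 - c" "a + B + 1 - p = a + b1 + b2 + 2 - c - p"
    using assms unfolding B_def D_def by auto
  show ?thesis using R unfolding e(2) unfolding e(1) D_def .
qed

end
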